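(* Under the assumptions of Proposition 1 (i.e. i.i.d. $\mathbf{X}_i$, $\mathbb{E}\{\mathbf{g}(\mathbf{X}_i;\boldsymbol\theta_0)\}=\mathbf 0$, $\max_{1\le j\le r}\mathbb{E}\{\sup_{\boldsymbol\theta\in\boldsymbol\Theta}|g_j(\mathbf{X}_i;\boldsymbol\theta)|^{\gamma}\}\le C_1$ with $\gamma>2$, the eigenvalues of $n^{-1}\sum_{i=1}^n\mathbf g(\mathbf X_i;\boldsymbol\theta)\mathbf g(\mathbf X_i;\boldsymbol\theta)^T$ lying uniformly in $\boldsymbol\theta\in\boldsymbol\Theta$ in $[C_2^{-1},C_2]$ with probability tending to one, and $r=o(n^{1/2-1/\gamma})$), one has $$\max_{\boldsymbol\lambda\in\widehat\Lambda_n(\boldsymbol\theta_0)}\frac1n\sum_{i=1}^n\log\{1+\boldsymbol\lambda^{T}\mathbf{g}(\mathbf{X}_i;\boldsymbol\theta_0)\}=O_p(rn^{-1}).$$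
   Context: $\widehat\Lambda_n(\boldsymbol\theta)=\{\boldsymbol\lambda\in\mathbb{R}^r:\boldsymbol\lambda^{T}\mathbf{g}(\mathbf{X}_i;\boldsymbol\theta)\in\mathcal V,\ i=1,\ldots,n\}$ with $\mathcal V$ an open interval containing zero. $C_1>0,C_2>1$ are constants not depending on $n$; $r$ may grow with $n$. *)

theory Defs
  imports "HOL-Probability.Probability" "Jordan_Normal_Form.Char_Poly" "HOL-Library.Landau_Symbols"
begin

text \<open>Vectors in R^r are represented as functions nat => real; only the
coordinates j < r matter (coordinates j >= r are required to vanish for lambda).
The estimating function g n x theta j is the j-th coordinate (j < r n) of
g(x; theta) at sample size n (its dimension r n may grow with n).
The data X n i (i < n) form the n-th row of the sample.\<close>

definition Lambda_hat ::
  "nat \<Rightarrow> nat \<Rightarrow> (nat \<Rightarrow> 'x) \<Rightarrow> ('x \<Rightarrow> 'p \<Rightarrow> nat \<Rightarrow> real) \<Rightarrow> real set \<Rightarrow> 'p \<Rightarrow> (nat \<Rightarrow> real) set"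
  where "Lambda_hat n r x g V \<theta> =
    {l. (\<forall>j\<ge>r. l j = 0) \<and> (\<forall>i<n. (\<Sum>j<r. l j * g (x i) \<theta> j) \<in> V)}"

definition sample_cov ::
  "nat \<Rightarrow> nat \<Rightarrow> (nat \<Rightarrow> 'x) \<Rightarrow> ('x \<Rightarrow> 'p \<Rightarrow> nat \<Rightarrow> real) \<Rightarrow> 'p \<Rightarrow> real mat"
  where "sample_cov n r x g \<theta> =
    mat r r (\<lambda>(j, k). (1 / real n) * (\<Sum>i<n. g (x i) \<theta> j * g (x i) \<theta> k))"

definition el_obj ::
  "nat \<Rightarrow> nat \<Rightarrow> (nat \<Rightarrow> 'x) \<Rightarrow> ('x \<Rightarrow> 'p \<Rightarrow> nat \<Rightarrow> real) \<Rightarrow> 'p \<Rightarrow> (nat \<Rightarrow> real) \<Rightarrow> real"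
  where "el_obj n r x g \<theta> l =
    (1 / real n) * (\<Sum>i<n. ln (1 + (\<Sum>j<r. l j * g (x i) \<theta> j)))"

end

theory Submission
  imports Defs
begin



lemma compact_box: "compact (PiE (UNIV::nat set) (\<lambda>_. {-1..1::real}))"
proof -
  have "compactin (product_topology (\<lambda>_. euclideanreal) (UNIV::nat set)) (PiE UNIV (\<lambda>_. {-1..1::real}))"
    by (subst compactin_PiE) auto
  then show ?thesis by (simp add: euclidean_product_topology)
qed

lemma quad_coef_zero:
  fixes a b :: real
  assumes "\<And>t. 0 \<le> a * t + b * t^2"
  shows "a = 0"
proof (rule ccontr)
  assume a: "a \<noteq> 0"
  define B where "B = \<bar>b\<bar> + 1"
  have B: "B > 0" unfolding B_def by (simp add: abs_add_one_gt_zero)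
  define t where "t = - a / B"
  have "0 \<le> a * t + b * t^2" by (rule assms)
  also have "a * t + b * t^2 = a^2 / B * (-1 + b / B)"
    using B by (simp add: t_def field_simps power2_eq_square)
  also have "\<dots> < 0"
  proof (rule mult_pos_neg)
    show "0 < a^2 / B" using a using B by simp
    have "b / B < 1" using B by (simp add: B_def)
    then show "-1 + b / B < 0" by simp
  qed
  finally show False by simp
qed

lemma quad_lower:
  fixes s :: "nat \<Rightarrow> nat \<Rightarrow> real" and c :: real and w :: "nat \<Rightarrow> real"
  assumes sym: "\<And>j k. s j k = s k j"
    and ev: "\<And>k. eigenvalue (mat r r (\<lambda>(j,k). s j k)) k \<Longrightarrow> c \<le> k"
  shows "c * (\<Sum>j<r. (w j)^2) \<le> (\<Sum>j<r. \<Sum>k<r. w j * s j k * w k)"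
proof (cases "r = 0")
  case True then show ?thesis by simp
next
  case False
  then have r0: "r > 0" by simp
  define q where "q u = (\<Sum>j<r. \<Sum>k<r. u j * s j k * u k)" for u :: "nat \<Rightarrow> real"
  define nn where "nn u = (\<Sum>j<r. (u j)^2)" for u :: "nat \<Rightarrow> real"
  define Bf where "Bf a b = (\<Sum>j<r. \<Sum>k<r. a j * s j k * b k)" for a b :: "nat \<Rightarrow> real"
  define K where "K = {u. (\<forall>j\<in>{r..}. u j = 0) \<and> nn u = 1}"
  have cq: "continuous_on UNIV q" unfolding q_def
    by (intro continuous_intros continuous_on_product_coordinates)
  have cnn: "continuous_on UNIV nn" unfolding nn_def
    by (intro continuous_intros continuous_on_product_coordinates)
  have Ksub: "K \<subseteq> PiE UNIV (\<lambda>_. {-1..1::real})"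
  proof
    fix u assume u: "u \<in> K"
    have "u j \<in> {-1..1}" for j
    proof (cases "j < r")
      case True
      have "(u j)^2 \<le> nn u" unfolding nn_def
        by (rule member_le_sum[of j "{..<r}" "\<lambda>j. (u j)^2"]) (use True in auto)
      then have "(u j)^2 \<le> 1" using u by (simp add: K_def)
      then show ?thesis by (simp add: abs_square_le_1 abs_le_iff)
    next
      case False then show ?thesis using u by (auto simp: K_def)
    qed
    then show "u \<in> PiE UNIV (\<lambda>_. {-1..1::real})" by auto
  qed
  have Kclosed: "closed K"
  proof -
    have "K = (\<Inter>j\<in>{r..}. {u. u j = 0}) \<inter> {u. nn u = 1}" by (auto simp: K_def)
    also have "closed \<dots>"
      by (intro closed_Int closed_INT ballI closed_Collect_eq continuous_on_product_coordinates
          cnn continuous_on_const)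
    finally show ?thesis .
  qed
  have Kcomp: "compact K"
  proof -
    have "compact (PiE UNIV (\<lambda>_. {-1..1::real}) \<inter> K)"
      by (rule compact_Int_closed[OF compact_box Kclosed])
    also have "PiE UNIV (\<lambda>_. {-1..1::real}) \<inter> K = K" using Ksub by blast
    finally show ?thesis .
  qed
  have Kne: "K \<noteq> {}"
  proof -
    have "(\<lambda>j. if j = 0 then 1 else 0 :: real) \<in> K"
      using r0 by (simp add: K_def nn_def if_distrib[where f="\<lambda>x. x^2"] cong: if_cong)
    then show ?thesis by blast
  qed
  obtain u where uK: "u \<in> K" and umin: "\<And>y. y \<in> K \<Longrightarrow> q u \<le> q y"
    using continuous_attains_inf[OF Kcomp Kne continuous_on_subset[OF cq]] by blast
  define \<mu> where "\<mu> = q u"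
  have hom: "\<mu> * nn v \<le> q v" if v: "\<And>j. j \<ge> r \<Longrightarrow> v j = 0" for v
  proof (cases "nn v = 0")
    case True
    then have "\<forall>j\<in>{..<r}. (v j)^2 = 0" unfolding nn_def
      by (subst sum_nonneg_eq_0_iff[symmetric]) auto
    then have "q v = 0" by (simp add: q_def)
    then show ?thesis using True by simp
  next
    case False
    have nnpos: "nn v > 0" using False by (simp add: nn_def sum_nonneg order_le_neq_trans)
    define \<nu> where "\<nu> = sqrt (nn v)"
    have \<nu>: "\<nu> > 0" "\<nu>^2 = nn v" using nnpos by (auto simp: \<nu>_def)
    define v' where "v' j = v j / \<nu>" for j
    have "nn v' = nn v / \<nu>^2"
      by (simp add: nn_def v'_def power_divide sum_divide_distrib)
    then have "nn v' = 1" using \<nu> nnpos by simp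
    then have "v' \<in> K" using v by (auto simp: K_def v'_def)
    then have "\<mu> \<le> q v'" using umin by (simp add: \<mu>_def)
    also have "q v' = q v / \<nu>^2"
      by (simp add: q_def v'_def sum_divide_distrib power2_eq_square)
    finally have "\<mu> \<le> q v / nn v" using \<nu> by simp
    then show ?thesis using nnpos by (simp add: pos_le_divide_eq)
  qed
  have uzero: "\<And>j. j \<ge> r \<Longrightarrow> u j = 0" and nnu: "nn u = 1" using uK by (auto simp: K_def)
  have symB: "Bf a b = Bf b a" for a b
    unfolding Bf_def
    by (subst sum.swap) (simp add: sym mult.commute mult.left_commute)
  have crit: "Bf u v = \<mu> * (\<Sum>j<r. u j * v j)" if v: "\<And>j. j \<ge> r \<Longrightarrow> v j = 0" for v
  proof -
    have "2 * (Bf u v - \<mu> * (\<Sum>j<r. u j * v j)) = 0"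
    proof (rule quad_coef_zero)
      fix t :: real
      have "\<mu> * nn (\<lambda>j. u j + t * v j) \<le> q (\<lambda>j. u j + t * v j)"
        by (rule hom) (simp add: uzero v)
      moreover have "q (\<lambda>j. u j + t * v j) = q u + t * (Bf u v + Bf v u) + t^2 * q v"
        unfolding q_def Bf_def
        by (simp add: algebra_simps power2_eq_square sum.distrib sum_distrib_left)
      moreover have "nn (\<lambda>j. u j + t * v j) = nn u + 2 * t * (\<Sum>j<r. u j * v j) + t^2 * nn v"
        unfolding nn_def
        by (simp add: algebra_simps power2_eq_square sum.distrib sum_distrib_left)
      ultimately show "0 \<le> 2 * (Bf u v - \<mu> * (\<Sum>j<r. u j * v j)) * t + (q v - \<mu> * nn v) * t^2"
        using nnu symB[of v u] by (simp add: \<mu>_def algebra_simps)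
    qed
    then show ?thesis by simp
  qed
  have eig: "eigenvalue (mat r r (\<lambda>(j,k). s j k)) \<mu>"
    unfolding eigenvalue_def eigenvector_def
  proof (intro exI conjI)
    show "vec r u \<in> carrier_vec (dim_row (mat r r (\<lambda>(j,k). s j k)))" by simp
    show "vec r u \<noteq> 0\<^sub>v (dim_row (mat r r (\<lambda>(j,k). s j k)))"
    proof
      assume "vec r u = 0\<^sub>v (dim_row (mat r r (\<lambda>(j,k). s j k)))"
      then have "\<And>j. j < r \<Longrightarrow> u j = 0"
        by (metis dim_row_mat(1) index_vec index_zero_vec(1))
      then have "nn u = 0" by (simp add: nn_def)
      then show False using nnu by simp
    qed
    show "mat r r (\<lambda>(j,k). s j k) *\<^sub>v vec r u = \<mu> \<cdot>\<^sub>v vec r u"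
    proof (rule eq_vecI)
      fix i assume i: "i < dim_vec (\<mu> \<cdot>\<^sub>v vec r u)"
      then have ir: "i < r" by simp
      define e where "e j = (if j = i then 1 else 0 :: real)" for j
      have "Bf u e = \<mu> * (\<Sum>j<r. u j * e j)" by (rule crit) (use ir in \<open>auto simp: e_def\<close>)
      moreover have "Bf u e = (\<Sum>j<r. u j * s j i)"
        unfolding Bf_def e_def using ir
        by (simp add: if_distrib[where f="\<lambda>x. _ * x"] cong: if_cong)
      moreover have "(\<Sum>j<r. u j * e j) = u i" unfolding e_def using ir
        by (simp add: if_distrib[where f="\<lambda>x. _ * x"] cong: if_cong)
      ultimately have "(\<Sum>j<r. s i j * u j) = \<mu> * u i" by (simp add: sym mult.commute)
      then show "(mat r r (\<lambda>(j,k). s j k) *\<^sub>v vec r u) $ i = (\<mu> \<cdot>\<^sub>v vec r u) $ i"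
        using ir by (simp add: scalar_prod_def lessThan_atLeast0)
    qed simp
  qed
  then have c\<mu>: "c \<le> \<mu>" by (rule ev)
  define w0 where "w0 j = (if j < r then w j else 0)" for j
  have h0: "\<mu> * nn w0 \<le> q w0" by (rule hom) (simp add: w0_def)
  have e1: "nn w0 = nn w" "q w0 = q w" by (simp_all add: nn_def q_def w0_def)
  have h1: "c * nn w \<le> \<mu> * nn w" by (rule mult_right_mono[OF c\<mu>]) (simp add: nn_def sum_nonneg)
  have "c * nn w \<le> q w" using h0 h1 unfolding e1 by linarith
  then show ?thesis by (simp add: nn_def q_def)
qed



lemma ln_bound_z:
  fixes z :: real assumes z: "1 \<le> z"
  shows "ln z \<le> (z - inverse z) / 2"
proof -
  define h where "h y = (y - inverse y) / 2 - ln y" for y :: real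
  have "h 1 \<le> h z"
  proof (rule DERIV_nonneg_imp_nondecreasing[OF z])
    fix y :: real assume y: "1 \<le> y" "y \<le> z"
    have d: "(h has_real_derivative ((1 + inverse y * inverse y) / 2 - inverse y)) (at y)"
      unfolding h_def using y
      by (intro derivative_eq_intros) (auto simp: inverse_eq_divide)
    have "(1 + inverse y * inverse y) / 2 - inverse y = (1 - inverse y)^2 / 2"
      using y by (simp add: power2_eq_square field_simps)
    with d show "\<exists>d. (h has_real_derivative d) (at y) \<and> 0 \<le> d" by auto
  qed
  then show ?thesis by (simp add: h_def)
qed

lemma ln_bound_pos:
  fixes x :: real assumes x: "0 \<le> x"
  shows "ln (1 + x) \<le> x - x^2 / (2 * (1 + x))"
proof -
  have "ln (1 + x) \<le> ((1 + x) - inverse (1 + x)) / 2" by (rule ln_bound_z) (use x in simp)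
  also have "((1 + x) - inverse (1 + x)) / 2 = x - x^2 / (2 * (1 + x))"
  proof -
    have p: "1 + x \<noteq> 0" using x by simp
    show ?thesis using p by (simp add: divide_simps power2_eq_square) (simp add: algebra_simps)
  qed
  finally show ?thesis .
qed

lemma ln_bound_neg:
  fixes x :: real assumes x: "-1 < x" "x \<le> 0"
  shows "ln (1 + x) \<le> x - x^2 / 2"
proof -
  define h where "h y = y - y^2 / 2 - ln (1 + y)" for y :: real
  have "h 0 \<le> h x"
  proof (rule DERIV_nonpos_imp_nonincreasing[OF x(2)])
    fix y :: real assume y: "x \<le> y" "y \<le> 0"
    have d: "(h has_real_derivative (1 - y - 1/(1+y))) (at y)"
      unfolding h_def using y x
      by (auto intro!: derivative_eq_intros simp: power2_eq_square)
    have "1 - y - 1/(1+y) = - (y^2 / (1+y))"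
      using y x by (simp add: field_simps power2_eq_square)
    moreover have "y^2 / (1+y) \<ge> 0" using y x by simp
    ultimately show "\<exists>d. (h has_real_derivative d) (at y) \<and> d \<le> 0" using d by auto
  qed
  then show ?thesis by (simp add: h_def)
qed

lemma ln_bound:
  fixes x m :: real assumes x: "-1 < x" "x \<le> m" and m: "0 \<le> m"
  shows "ln (1 + x) \<le> x - x^2 / (2 * (1 + m))"
proof (cases "x \<ge> 0")
  case True
  have "ln (1 + x) \<le> x - x^2 / (2 * (1 + x))" by (rule ln_bound_pos[OF True])
  also have "x^2 / (2 * (1 + m)) \<le> x^2 / (2 * (1 + x))"
    using True x by (intro divide_left_mono) auto
  then have "x - x^2 / (2 * (1 + x)) \<le> x - x^2 / (2 * (1 + m))" by simp
  finally show ?thesis .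
next
  case False
  have "ln (1 + x) \<le> x - x^2 / 2" by (rule ln_bound_neg) (use x False in auto)
  also have "x^2 / (2 * (1 + m)) \<le> x^2 / 2"
    using m by (intro divide_left_mono) auto
  then have "x - x^2 / 2 \<le> x - x^2 / (2 * (1 + m))" by simp
  finally show ?thesis .
qed



lemma det_bound:
  fixes G :: "nat \<Rightarrow> nat \<Rightarrow> real" and l :: "nat \<Rightarrow> real" and n r :: nat and b c :: real
  assumes n: "n > 0" and c: "c > 0" and b: "b \<ge> 0"
    and quad: "c * (\<Sum>j<r. (l j)^2) \<le> (1/n) * (\<Sum>i<n. (\<Sum>j<r. l j * G i j)^2)"
    and Mb: "\<And>i. i < n \<Longrightarrow> (\<Sum>j<r. (G i j)^2) \<le> b"
    and sb: "(\<Sum>j<r. (\<Sum>i<n. G i j)^2) / n^2 * b \<le> c^2/16"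
    and pos: "\<And>i. i < n \<Longrightarrow> -1 < (\<Sum>j<r. l j * G i j)"
  shows "(1/n) * (\<Sum>i<n. ln (1 + (\<Sum>j<r. l j * G i j))) \<le> (\<Sum>j<r. (\<Sum>i<n. G i j)^2) / n^2 / c"
proof -
  define x where "x i = (\<Sum>j<r. l j * G i j)" for i
  define \<rho>2 where "\<rho>2 = (\<Sum>j<r. (l j)^2)"
  define S2 where "S2 = (\<Sum>j<r. (\<Sum>i<n. G i j)^2) / n^2"
  define \<rho> where "\<rho> = sqrt \<rho>2"
  define s where "s = sqrt S2"
  define m where "m = \<rho> * sqrt b"
  have \<rho>2: "\<rho>2 \<ge> 0" by (simp add: \<rho>2_def sum_nonneg)
  have S2: "S2 \<ge> 0" by (simp add: S2_def sum_nonneg)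
  have \<rho>: "\<rho> \<ge> 0" "\<rho>^2 = \<rho>2" using \<rho>2 by (auto simp: \<rho>_def)
  have s: "s \<ge> 0" "s^2 = S2" using S2 by (auto simp: s_def)
  have m: "m \<ge> 0" using \<rho> b by (simp add: m_def)
  have xm: "x i \<le> m" if i: "i < n" for i
  proof -
    have "(x i)^2 \<le> \<rho>2 * (\<Sum>j<r. (G i j)^2)"
      unfolding x_def \<rho>2_def by (rule Cauchy_Schwarz_ineq_sum)
    also have "\<dots> \<le> \<rho>2 * b" using Mb[OF i] \<rho>2 by (simp add: mult_left_mono)
    finally have "(x i)^2 \<le> m^2" using \<rho> b by (simp add: m_def power_mult_distrib)
    then show ?thesis using m by (rule power2_le_imp_le)
  qed
  define a where "a = (1/n) * (\<Sum>i<n. x i)"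
  have a_eq: "a = (\<Sum>j<r. l j * ((\<Sum>i<n. G i j) / n))"
    unfolding a_def x_def
    by (subst sum.swap) (simp add: sum_divide_distrib sum_distrib_left mult.commute)
  have "a^2 \<le> \<rho>2 * (\<Sum>j<r. ((\<Sum>i<n. G i j) / n)^2)"
    unfolding a_eq \<rho>2_def by (rule Cauchy_Schwarz_ineq_sum)
  also have "(\<Sum>j<r. ((\<Sum>i<n. G i j) / n)^2) = S2"
    unfolding S2_def by (simp add: power_divide flip: sum_divide_distrib)
  finally have "a^2 \<le> (\<rho> * s)^2" using \<rho> s by (simp add: power_mult_distrib)
  then have a_le: "a \<le> \<rho> * s" by (rule power2_le_imp_le) (use \<rho> s in simp)
  have "(1/n) * (\<Sum>i<n. ln (1 + x i)) \<le> (1/n) * (\<Sum>i<n. x i - (x i)^2 / (2 * (1 + m)))"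
    using n by (intro mult_left_mono sum_mono ln_bound xm m) (auto simp: pos x_def)
  also have "\<dots> = a - ((1/n) * (\<Sum>i<n. (x i)^2)) / (2 * (1 + m))"
    by (simp add: a_def sum_subtractf sum_divide_distrib right_diff_distrib mult.commute)
  also have "\<dots> \<le> \<rho> * s - c * \<rho>^2 / (2 * (1 + m))"
  proof -
    have "c * \<rho>^2 \<le> (1/n) * (\<Sum>i<n. (x i)^2)" using quad \<rho> by (simp add: \<rho>2_def x_def)
    then have "c * \<rho>^2 / (2 * (1 + m)) \<le> ((1/n) * (\<Sum>i<n. (x i)^2)) / (2 * (1 + m))"
      using m by (intro divide_right_mono) auto
    then show ?thesis using a_le by linarith
  qed
  also have "\<dots> \<le> S2 / c"
  proof (cases "m \<le> 1")
    case True
    have "c * \<rho>^2 / 4 \<le> c * \<rho>^2 / (2 * (1 + m))"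
      using True m c by (intro divide_left_mono) auto
    moreover have "\<rho> * s \<le> c * \<rho>^2 / 4 + S2 / c"
    proof -
      have "0 \<le> (c * \<rho> / 2 - s)^2" by simp
      then have "0 \<le> (c * \<rho> / 2 - s)^2 / c" using c by simp
      also have "(c * \<rho> / 2 - s)^2 / c = c * \<rho>^2 / 4 + s^2 / c - \<rho> * s"
        using c by (simp add: power2_eq_square field_simps)
      finally show ?thesis using s by simp
    qed
    ultimately show ?thesis using s by linarith
  next
    case False
    then have mpos: "m > 1" by simp
    have "sqrt b \<noteq> 0" "\<rho> \<noteq> 0" using mpos by (auto simp: m_def)
    then have bpos: "sqrt b > 0" and \<rho>pos: "\<rho> > 0" using \<rho> b by auto
    have "s * sqrt b \<le> c / 4"
    proof -
      have "(s * sqrt b)^2 \<le> (c/4)^2" using sb s b by (simp add: power_mult_distrib S2_def power_divide)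
      then show ?thesis by (rule power2_le_imp_le) (use c in simp)
    qed
    then have "\<rho> * s \<le> c * \<rho> / (4 * sqrt b)"
      using bpos \<rho>pos by (simp add: field_simps)
    also have "c * \<rho> / (4 * sqrt b) = c * \<rho>^2 / (4 * m)"
      using bpos \<rho>pos by (simp add: m_def power2_eq_square)
    also have "\<dots> \<le> c * \<rho>^2 / (2 * (1 + m))"
      using mpos c \<rho>pos by (intro divide_left_mono) auto
    finally have "\<rho> * s - c * \<rho>^2 / (2 * (1 + m)) \<le> 0" by simp
    also have "0 \<le> S2 / c" using S2 c by simp
    finally show ?thesis .
  qed
  finally show ?thesis by (simp add: x_def S2_def)
qed



lemma power_mean:
  fixes a :: "'i \<Rightarrow> real" and p :: real
  assumes S: "finite S" and a: "\<And>i. i \<in> S \<Longrightarrow> 0 \<le> a i" and p: "1 \<le> p"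
  shows "(\<Sum>i\<in>S. a i) powr p \<le> real (card S) powr (p - 1) * (\<Sum>i\<in>S. a i powr p)"
proof -
  define J where "J = {i\<in>S. a i > 0}"
  have JS: "J \<subseteq> S" and J: "finite J" using S by (auto simp: J_def)
  have sumJ: "(\<Sum>i\<in>S. a i) = (\<Sum>i\<in>J. a i)"
    by (rule sum.mono_neutral_right[OF S JS]) (use a in \<open>force simp: J_def\<close>)
  have sumJp: "(\<Sum>i\<in>S. a i powr p) = (\<Sum>i\<in>J. a i powr p)"
    by (rule sum.mono_neutral_right[OF S JS]) (use a in \<open>force simp: J_def\<close>)
  have rhs_nn: "0 \<le> real (card S) powr (p - 1) * (\<Sum>i\<in>S. a i powr p)"
    by (simp add: sum_nonneg)
  show ?thesis
  proof (cases "J = {}")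
    case True
    then show ?thesis using sumJ rhs_nn p by simp
  next
    case False
    define k where "k = real (card J)"
    have k: "k > 0" using False J by (simp add: k_def card_gt_0_iff)
    have "(\<Sum>i\<in>J. (1/k) *\<^sub>R a i) powr p \<le> (\<Sum>i\<in>J. (1/k) * a i powr p)"
      by (rule convex_on_sum[OF J False powr_convex[OF p]])
         (use J k False in \<open>auto simp: k_def J_def\<close>)
    moreover have "(\<Sum>i\<in>J. (1/k) *\<^sub>R a i) = (\<Sum>i\<in>J. a i) / k"
      by (simp add: sum_divide_distrib)
    moreover have "(\<Sum>i\<in>J. (1/k) * a i powr p) = (\<Sum>i\<in>J. a i powr p) / k"
      by (simp add: sum_divide_distrib)
    ultimately have "(\<Sum>i\<in>J. a i) powr p / k powr p \<le> (\<Sum>i\<in>J. a i powr p) / k"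
      using k by (simp add: powr_divide sum_nonneg less_imp_le J_def)
    then have "(\<Sum>i\<in>J. a i) powr p \<le> k powr p / k * (\<Sum>i\<in>J. a i powr p)"
      using k by (simp add: field_simps)
    also have "k powr p / k = k powr (p - 1)" using k by (simp add: powr_diff)
    also have "k powr (p - 1) \<le> real (card S) powr (p - 1)"
      using k p card_mono[OF S JS] by (intro powr_mono2) (auto simp: k_def)
    then have "k powr (p - 1) * (\<Sum>i\<in>J. a i powr p) \<le> real (card S) powr (p - 1) * (\<Sum>i\<in>J. a i powr p)"
      by (intro mult_right_mono) (auto simp: sum_nonneg)
    finally show ?thesis using sumJ sumJp by simp
  qed
qed



lemma sq_le_powr:
  fixes y \<gamma> :: real assumes "2 \<le> \<gamma>"
  shows "y^2 \<le> 1 + \<bar>y\<bar> powr \<gamma>"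
proof (cases "\<bar>y\<bar> \<le> 1")
  case True
  then have "y^2 \<le> 1" by (simp add: abs_square_le_1)
  then show ?thesis by (smt (verit) powr_ge_zero)
next
  case False
  then have "y^2 = \<bar>y\<bar> powr 2" by (simp add: powr_numeral)
  also have "\<dots> \<le> \<bar>y\<bar> powr \<gamma>" using False assms by (intro powr_mono) auto
  finally show ?thesis by simp
qed

lemma (in prob_space) sq_moment:
  fixes Z :: "'a \<Rightarrow> real"
  assumes Zm: "Z \<in> borel_measurable M" and \<gamma>: "2 \<le> \<gamma>"
    and mom: "(\<integral>\<^sup>+\<omega>. ennreal (\<bar>Z \<omega>\<bar> powr \<gamma>) \<partial>M) \<le> ennreal C"
    and C: "0 \<le> C"
  shows "integrable M (\<lambda>\<omega>. (Z \<omega>)^2)" "expectation (\<lambda>\<omega>. (Z \<omega>)^2) \<le> 1 + C"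
    "integrable M Z"
proof -
  have m2[measurable]: "(\<lambda>\<omega>. \<bar>Z \<omega>\<bar> powr \<gamma>) \<in> borel_measurable M" using Zm by measurable
  have "(\<integral>\<^sup>+\<omega>. ennreal ((Z \<omega>)^2) \<partial>M) \<le> (\<integral>\<^sup>+\<omega>. (1 + ennreal (\<bar>Z \<omega>\<bar> powr \<gamma>)) \<partial>M)"
  proof (rule nn_integral_mono)
    fix \<omega>
    have "ennreal ((Z \<omega>)^2) \<le> ennreal (1 + \<bar>Z \<omega>\<bar> powr \<gamma>)"
      by (rule ennreal_leI) (rule sq_le_powr[OF \<gamma>])
    also have "\<dots> = 1 + ennreal (\<bar>Z \<omega>\<bar> powr \<gamma>)" by (simp add: ennreal_plus)
    finally show "ennreal ((Z \<omega>)^2) \<le> 1 + ennreal (\<bar>Z \<omega>\<bar> powr \<gamma>)" .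
  qed
  also have "\<dots> = (\<integral>\<^sup>+\<omega>. 1 \<partial>M) + (\<integral>\<^sup>+\<omega>. ennreal (\<bar>Z \<omega>\<bar> powr \<gamma>) \<partial>M)"
    by (rule nn_integral_add) auto
  also have "\<dots> \<le> 1 + ennreal C" using mom by (simp add: emeasure_space_1 add_left_mono)
  finally have nn: "(\<integral>\<^sup>+\<omega>. ennreal ((Z \<omega>)^2) \<partial>M) \<le> ennreal (1 + C)"
    using C by (simp add: ennreal_plus)
  show int2: "integrable M (\<lambda>\<omega>. (Z \<omega>)^2)"
  proof (rule integrableI_bounded)
    show "(\<lambda>\<omega>. (Z \<omega>)^2) \<in> borel_measurable M" using Zm by measurable
    have "(\<integral>\<^sup>+\<omega>. ennreal (norm ((Z \<omega>)^2)) \<partial>M) = (\<integral>\<^sup>+\<omega>. ennreal ((Z \<omega>)^2) \<partial>M)" by simp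
    also have "\<dots> < \<infinity>" using nn by (simp add: le_less_trans)
    finally show "(\<integral>\<^sup>+\<omega>. ennreal (norm ((Z \<omega>)^2)) \<partial>M) < \<infinity>" .
  qed
  have "ennreal (expectation (\<lambda>\<omega>. (Z \<omega>)^2)) = (\<integral>\<^sup>+\<omega>. ennreal ((Z \<omega>)^2) \<partial>M)"
    by (rule nn_integral_eq_integral[symmetric]) (use int2 in auto)
  then show "expectation (\<lambda>\<omega>. (Z \<omega>)^2) \<le> 1 + C"
    using nn C by (metis ennreal_le_iff add_nonneg_nonneg zero_le_one)
  show "integrable M Z" by (rule square_integrable_imp_integrable[OF Zm int2])
qed

lemma (in prob_space) indep_pair:
  assumes ind: "indep_vars (\<lambda>_. S) X I" and ik: "i \<in> I" "k \<in> I" "i \<noteq> k"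
    and fm: "f \<in> borel_measurable S" and hm: "h \<in> borel_measurable S"
  shows "indep_var borel (\<lambda>\<omega>. f (X i \<omega>)) borel (\<lambda>\<omega>. h (X k \<omega>))"
proof -
  have "indep_var (PiM {i} (\<lambda>_. S)) (\<lambda>\<omega>. restrict (\<lambda>i. X i \<omega>) {i})
                  (PiM {k} (\<lambda>_. S)) (\<lambda>\<omega>. restrict (\<lambda>i. X i \<omega>) {k})"
    by (rule indep_var_restrict[OF ind]) (use ik in auto)
  then have "indep_var borel ((\<lambda>x. f (x i)) \<circ> (\<lambda>\<omega>. restrict (\<lambda>i. X i \<omega>) {i}))
                       borel ((\<lambda>x. h (x k)) \<circ> (\<lambda>\<omega>. restrict (\<lambda>i. X i \<omega>) {k}))"
    by (rule indep_var_compose)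
       (auto intro!: measurable_compose[OF measurable_component_singleton[of i "{i}" "\<lambda>_. S"] fm]
                     measurable_compose[OF measurable_component_singleton[of k "{k}" "\<lambda>_. S"] hm])
  moreover have "((\<lambda>x. f (x i)) \<circ> (\<lambda>\<omega>. restrict (\<lambda>i. X i \<omega>) {i})) = (\<lambda>\<omega>. f (X i \<omega>))"
    "((\<lambda>x. h (x k)) \<circ> (\<lambda>\<omega>. restrict (\<lambda>i. X i \<omega>) {k})) = (\<lambda>\<omega>. h (X k \<omega>))"
    by (auto simp: fun_eq_iff)
  ultimately show ?thesis by simp
qed

lemma (in prob_space) second_moment:
  fixes X :: "nat \<Rightarrow> 'a \<Rightarrow> 'x" and f :: "nat \<Rightarrow> 'x \<Rightarrow> real"
  assumes Xm: "\<And>i. i < n \<Longrightarrow> X i \<in> measurable M S"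
    and ind: "indep_vars (\<lambda>_. S) X {..<n}"
    and fm: "\<And>j. j < r \<Longrightarrow> f j \<in> borel_measurable S"
    and mean: "\<And>i j. i < n \<Longrightarrow> j < r \<Longrightarrow> expectation (\<lambda>\<omega>. f j (X i \<omega>)) = 0"
    and mom: "\<And>i j. i < n \<Longrightarrow> j < r \<Longrightarrow> (\<integral>\<^sup>+\<omega>. ennreal (\<bar>f j (X i \<omega>)\<bar> powr \<gamma>) \<partial>M) \<le> ennreal C"
    and \<gamma>: "2 \<le> \<gamma>" and C: "0 \<le> C"
  shows "integrable M (\<lambda>\<omega>. \<Sum>j<r. (\<Sum>i<n. f j (X i \<omega>))^2)"
    "expectation (\<lambda>\<omega>. \<Sum>j<r. (\<Sum>i<n. f j (X i \<omega>))^2) \<le> real n * real r * (1 + C)"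
proof -
  define Y where "Y i j \<omega> = f j (X i \<omega>)" for i j \<omega>
  have Ym: "Y i j \<in> borel_measurable M" if "i < n" "j < r" for i j
    unfolding Y_def using measurable_compose[OF Xm fm] that by (simp add: comp_def)
  have Yeq: "Y i j = (\<lambda>\<omega>. f j (X i \<omega>))" for i j by (simp add: Y_def fun_eq_iff)
  note sm = sq_moment[OF Ym \<gamma> mom[folded Y_def] C]
  have prod_int: "integrable M (\<lambda>\<omega>. Y i j \<omega> * Y k j \<omega>)" if "i < n" "k < n" "j < r" for i k j
  proof (cases "i = k")
    case True then show ?thesis using sm(1) that by (simp add: power2_eq_square)
  next
    case False
    have "indep_var borel (Y i j) borel (Y k j)"
      unfolding Y_def using indep_pair[OF ind _ _ False fm fm] that by auto
    then show ?thesis by (rule indep_var_integrable) (use sm(3) that in auto)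
  qed
  have prod_E: "expectation (\<lambda>\<omega>. Y i j \<omega> * Y k j \<omega>) =
      (if i = k then expectation (\<lambda>\<omega>. (Y i j \<omega>)^2) else 0)" if "i < n" "k < n" "j < r" for i k j
  proof (cases "i = k")
    case True then show ?thesis by (simp add: power2_eq_square)
  next
    case False
    have "indep_var borel (Y i j) borel (Y k j)"
      unfolding Y_def using indep_pair[OF ind _ _ False fm fm] that by auto
    then have "expectation (\<lambda>\<omega>. Y i j \<omega> * Y k j \<omega>) = expectation (Y i j) * expectation (Y k j)"
      by (rule indep_var_lebesgue_integral) (use sm(3) that in auto)
    then show ?thesis using mean that False by (simp add: Yeq)
  qed
  have sq_exp: "(\<lambda>\<omega>. (\<Sum>i<n. Y i j \<omega>)^2) = (\<lambda>\<omega>. \<Sum>i<n. \<Sum>k<n. Y i j \<omega> * Y k j \<omega>)" for j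
    by (simp add: power2_eq_square sum_product)
  have int_j: "integrable M (\<lambda>\<omega>. (\<Sum>i<n. Y i j \<omega>)^2)" if "j < r" for j
    unfolding sq_exp by (intro Bochner_Integration.integrable_sum) (auto intro: prod_int[OF _ _ that])
  have E_j: "expectation (\<lambda>\<omega>. (\<Sum>i<n. Y i j \<omega>)^2) \<le> real n * (1 + C)" if j: "j < r" for j
  proof -
    have "expectation (\<lambda>\<omega>. (\<Sum>i<n. Y i j \<omega>)^2) = (\<Sum>i<n. \<Sum>k<n. expectation (\<lambda>\<omega>. Y i j \<omega> * Y k j \<omega>))"
      unfolding sq_exp
      by (subst Bochner_Integration.integral_sum, auto intro!: Bochner_Integration.integrable_sum prod_int j, rule sum.cong[OF refl],
          rule Bochner_Integration.integral_sum, auto intro!: prod_int j)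
    also have "\<dots> = (\<Sum>i<n. expectation (\<lambda>\<omega>. (Y i j \<omega>)^2))"
      by (rule sum.cong[OF refl]) (simp add: prod_E j)
    also have "\<dots> \<le> (\<Sum>i<n. 1 + C)"
      by (rule sum_mono) (use sm(2) j in \<open>simp add: Y_def\<close>)
    finally show ?thesis by simp
  qed
  show "integrable M (\<lambda>\<omega>. \<Sum>j<r. (\<Sum>i<n. f j (X i \<omega>))^2)"
    using int_j by (auto simp: Y_def)
  have "expectation (\<lambda>\<omega>. \<Sum>j<r. (\<Sum>i<n. f j (X i \<omega>))^2) = (\<Sum>j<r. expectation (\<lambda>\<omega>. (\<Sum>i<n. Y i j \<omega>)^2))"
    using int_j by (simp add: Bochner_Integration.integral_sum Y_def)
  also have "\<dots> \<le> (\<Sum>j<r. real n * (1 + C))" by (rule sum_mono) (simp add: E_j)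
  finally show "expectation (\<lambda>\<omega>. \<Sum>j<r. (\<Sum>i<n. f j (X i \<omega>))^2) \<le> real n * real r * (1 + C)"
    by (simp add: mult_ac)
qed



lemma (in prob_space) single_markov:
  fixes V :: "nat \<Rightarrow> 'a \<Rightarrow> real"
  assumes Vm: "\<And>j. j < r \<Longrightarrow> V j \<in> borel_measurable M"
    and mom: "\<And>j. j < r \<Longrightarrow> (\<integral>\<^sup>+\<omega>. ennreal (\<bar>V j \<omega>\<bar> powr \<gamma>) \<partial>M) \<le> ennreal C"
    and \<gamma>: "2 \<le> \<gamma>" and C: "0 \<le> C" and b: "0 < b"
  shows "measure M {\<omega>\<in>space M. b < (\<Sum>j<r. (V j \<omega>)^2)} \<le> real r powr (\<gamma>/2) * C / b powr (\<gamma>/2)"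
proof -
  define Z where "Z \<omega> = (\<Sum>j<r. (V j \<omega>)^2)" for \<omega>
  define p where "p = \<gamma> / 2"
  have p: "1 \<le> p" using \<gamma> by (simp add: p_def)
  have Zm[measurable]: "Z \<in> borel_measurable M" unfolding Z_def using Vm by measurable
  have Z0: "0 \<le> Z \<omega>" for \<omega> by (simp add: Z_def sum_nonneg)
  have Vpm[measurable]: "(\<lambda>\<omega>. \<bar>V j \<omega>\<bar> powr \<gamma>) \<in> borel_measurable M" if "j < r" for j
    using Vm[OF that] by measurable
  have pt: "Z \<omega> powr p \<le> real r powr (p - 1) * (\<Sum>j<r. \<bar>V j \<omega>\<bar> powr \<gamma>)" for \<omega>
  proof -
    have "Z \<omega> powr p \<le> real (card {..<r}) powr (p - 1) * (\<Sum>j<r. ((V j \<omega>)^2) powr p)"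
      unfolding Z_def by (rule power_mean[OF _ _ p]) auto
    moreover have "((V j \<omega>)^2) powr p = \<bar>V j \<omega>\<bar> powr \<gamma>" for j
    proof -
      have e: "(V j \<omega>)^2 = \<bar>V j \<omega>\<bar> powr 2" by simp
      show ?thesis unfolding e powr_powr p_def by simp
    qed
    ultimately show ?thesis by simp
  qed
  have "(\<integral>\<^sup>+\<omega>. ennreal (Z \<omega> powr p) \<partial>M) \<le> (\<integral>\<^sup>+\<omega>. ennreal (real r powr (p - 1)) * (\<Sum>j<r. ennreal (\<bar>V j \<omega>\<bar> powr \<gamma>)) \<partial>M)"
  proof (rule nn_integral_mono)
    fix \<omega>
    have "ennreal (Z \<omega> powr p) \<le> ennreal (real r powr (p - 1) * (\<Sum>j<r. \<bar>V j \<omega>\<bar> powr \<gamma>))"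
      by (rule ennreal_leI) (rule pt)
    also have "\<dots> = ennreal (real r powr (p - 1)) * (\<Sum>j<r. ennreal (\<bar>V j \<omega>\<bar> powr \<gamma>))"
      by (simp add: ennreal_mult sum_nonneg)
    finally show "ennreal (Z \<omega> powr p) \<le> ennreal (real r powr (p - 1)) * (\<Sum>j<r. ennreal (\<bar>V j \<omega>\<bar> powr \<gamma>))" .
  qed
  also have "\<dots> = ennreal (real r powr (p - 1)) * (\<Sum>j<r. (\<integral>\<^sup>+\<omega>. ennreal (\<bar>V j \<omega>\<bar> powr \<gamma>) \<partial>M))"
  proof -
    have Vpm': "(\<lambda>\<omega>. ennreal (\<bar>V j \<omega>\<bar> powr \<gamma>)) \<in> borel_measurable M" if "j < r" for j
      using Vpm[OF that] by measurable
    have sm: "(\<lambda>\<omega>. \<Sum>j<r. ennreal (\<bar>V j \<omega>\<bar> powr \<gamma>)) \<in> borel_measurable M"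
      by (intro borel_measurable_sum) (simp add: Vpm')
    show ?thesis
      by (subst nn_integral_cmult[OF sm]) (rule arg_cong[where f="\<lambda>x. _ * x"], rule nn_integral_sum, rule Vpm', simp)
  qed
  also have "\<dots> \<le> ennreal (real r powr (p - 1)) * (\<Sum>j<r. ennreal C)"
    by (intro mult_left_mono sum_mono mom) auto
  also have "\<dots> = ennreal (real r powr p * C)"
  proof (cases "r = 0")
    case True then show ?thesis by simp
  next
    case False
    then have "real r powr (p - 1) * (real r * C) = real r powr p * C"
      by (simp add: powr_diff field_simps)
    then show ?thesis using C by (simp add: ennreal_mult[symmetric] ennreal_of_nat_eq_real_of_nat)
  qed
  finally have nn: "(\<integral>\<^sup>+\<omega>. ennreal (Z \<omega> powr p) \<partial>M) \<le> ennreal (real r powr p * C)" .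
  have intZ: "integrable M (\<lambda>\<omega>. Z \<omega> powr p)"
  proof (rule integrableI_bounded)
    show "(\<lambda>\<omega>. Z \<omega> powr p) \<in> borel_measurable M" by measurable
    have "(\<integral>\<^sup>+\<omega>. ennreal (norm (Z \<omega> powr p)) \<partial>M) = (\<integral>\<^sup>+\<omega>. ennreal (Z \<omega> powr p) \<partial>M)" by simp
    also have "\<dots> < \<infinity>" using nn by (simp add: le_less_trans)
    finally show "(\<integral>\<^sup>+\<omega>. ennreal (norm (Z \<omega> powr p)) \<partial>M) < \<infinity>" .
  qed
  have "ennreal (expectation (\<lambda>\<omega>. Z \<omega> powr p)) = (\<integral>\<^sup>+\<omega>. ennreal (Z \<omega> powr p) \<partial>M)"
    by (rule nn_integral_eq_integral[symmetric]) (use intZ in auto)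
  then have EZ: "expectation (\<lambda>\<omega>. Z \<omega> powr p) \<le> real r powr p * C"
    using nn C by (metis ennreal_le_iff mult_nonneg_nonneg powr_ge_zero)
  have bp: "0 < b powr p" using b by simp
  have "{\<omega>\<in>space M. b < Z \<omega>} \<subseteq> {\<omega>\<in>space M. b powr p \<le> Z \<omega> powr p}"
    using b p by (auto intro!: powr_mono2)
  then have "measure M {\<omega>\<in>space M. b < Z \<omega>} \<le> measure M {\<omega>\<in>space M. b powr p \<le> Z \<omega> powr p}"
    by (intro finite_measure_mono) measurable
  also have "\<dots> \<le> expectation (\<lambda>\<omega>. Z \<omega> powr p) / b powr p"
    by (rule integral_Markov_inequality_measure[OF intZ _ _ bp]) auto
  also have "\<dots> \<le> real r powr p * C / b powr p"
    using EZ bp by (simp add: divide_right_mono)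
  finally show ?thesis by (simp add: Z_def p_def)
qed



lemma rate_eventually:
  fixes r :: "nat \<Rightarrow> nat" and \<gamma> \<eta> :: real
  assumes \<gamma>: "\<gamma> > 2" and r_rate: "(\<lambda>n. real (r n)) \<in> o(\<lambda>n. real n powr (1/2 - 1/\<gamma>))"
    and \<eta>: "\<eta> > 0"
  shows "eventually (\<lambda>n. (real (r n) + 1)^2 * real n powr (2/\<gamma>) / real n \<le> \<eta>^2) sequentially"
proof -
  define q where "q = 1/2 - 1/\<gamma>"
  have q: "q > 0" using \<gamma> by (simp add: q_def field_simps)
  have e1: "eventually (\<lambda>n. norm (real (r n)) \<le> (\<eta>/2) * norm (real n powr q)) sequentially"
    using landau_o.smallD[OF r_rate[folded q_def], of "\<eta>/2"] \<eta> by simp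
  define N0 where "N0 = nat \<lceil>(2/\<eta>) powr (1/q)\<rceil> + 1"
  have e2: "eventually (\<lambda>n. N0 \<le> n) sequentially" by (rule eventually_ge_at_top)
  show ?thesis using e1 e2
  proof eventually_elim
    case (elim n)
    have npos: "real n > 0" using elim(2) by (simp add: N0_def)
    have "(2/\<eta>) powr (1/q) \<le> real n"
      using elim(2) unfolding N0_def by linarith
    then have "((2/\<eta>) powr (1/q)) powr q \<le> real n powr q"
      using q by (intro powr_mono2) auto
    then have nq: "2/\<eta> \<le> real n powr q" using q \<eta> by (simp add: powr_powr)
    have "1 \<le> (\<eta>/2) * real n powr q" using nq \<eta> by (simp add: field_simps)
    moreover have "real (r n) \<le> (\<eta>/2) * real n powr q" using elim(1) by simp
    ultimately have rq: "real (r n) + 1 \<le> \<eta> * real n powr q" by linarith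
    have "(real (r n) + 1)^2 \<le> (\<eta> * real n powr q)^2"
      by (rule power_mono[OF rq]) simp
    also have "\<dots> = \<eta>^2 * real n powr (1 - 2/\<gamma>)"
      using npos by (simp add: power_mult_distrib powr_numeral[symmetric] powr_powr q_def algebra_simps)
    finally have "(real (r n) + 1)^2 * real n powr (2/\<gamma>) / real n \<le> \<eta>^2 * real n powr (1 - 2/\<gamma>) * real n powr (2/\<gamma>) / real n"
      using npos by (intro divide_right_mono mult_right_mono) auto
    also have "\<dots> = \<eta>^2" using npos by (simp add: mult.assoc powr_add[symmetric])
    finally show ?case .
  qed
qed


lemma quad_eq:
  fixes G :: "nat \<Rightarrow> nat \<Rightarrow> real"
  shows "(\<Sum>j<r. \<Sum>k<r. w j * ((1/real n) * (\<Sum>i<n. G i j * G i k)) * w k) = (1/real n) * (\<Sum>i<n. (\<Sum>j<r. w j * G i j)^2)"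
proof -
  have "(1/real n) * (\<Sum>i<n. (\<Sum>j<r. w j * G i j)^2) = (\<Sum>i<n. \<Sum>j<r. \<Sum>k<r. (1/real n) * (w j * G i j * (w k * G i k)))"
    by (simp add: power2_eq_square sum_product sum_distrib_left sum_distrib_right sum_divide_distrib)
       (rule sum.cong[OF refl], rule sum.swap)
  also have "\<dots> = (\<Sum>j<r. \<Sum>i<n. \<Sum>k<r. (1/real n) * (w j * G i j * (w k * G i k)))"
    by (rule sum.swap)
  also have "\<dots> = (\<Sum>j<r. \<Sum>k<r. \<Sum>i<n. (1/real n) * (w j * G i j * (w k * G i k)))"
    by (rule sum.cong[OF refl], rule sum.swap)
  also have "\<dots> = (\<Sum>j<r. \<Sum>k<r. w j * ((1/real n) * (\<Sum>i<n. G i j * G i k)) * w k)"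
    by (simp add: sum_distrib_left sum_distrib_right mult_ac)
  finally show ?thesis by simp
qed

lemma (in prob_space) max_markov:
  fixes X :: "nat \<Rightarrow> 'a \<Rightarrow> 'x" and f :: "nat \<Rightarrow> 'x \<Rightarrow> real"
  assumes Xm: "\<And>i. i < n \<Longrightarrow> X i \<in> measurable M S"
    and fm: "\<And>j. j < r \<Longrightarrow> f j \<in> borel_measurable S"
    and mom: "\<And>i j. i < n \<Longrightarrow> j < r \<Longrightarrow> (\<integral>\<^sup>+\<omega>. ennreal (\<bar>f j (X i \<omega>)\<bar> powr \<gamma>) \<partial>M) \<le> ennreal C"
    and \<gamma>: "2 \<le> \<gamma>" and C: "0 \<le> C" and b: "0 < b"
  shows "{\<omega>\<in>space M. \<exists>i<n. b < (\<Sum>j<r. (f j (X i \<omega>))^2)} \<in> sets M"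
    "measure M {\<omega>\<in>space M. \<exists>i<n. b < (\<Sum>j<r. (f j (X i \<omega>))^2)} \<le> real n * (real r powr (\<gamma>/2) * C / b powr (\<gamma>/2))"
proof -
  have Ym: "(\<lambda>\<omega>. f j (X i \<omega>)) \<in> borel_measurable M" if "i < n" "j < r" for i j
    using measurable_compose[OF Xm fm] that by (simp add: comp_def)
  have Zm: "(\<lambda>\<omega>. \<Sum>j<r. (f j (X i \<omega>))^2) \<in> borel_measurable M" if "i < n" for i
    by (intro borel_measurable_sum borel_measurable_power Ym that) auto
  have eq: "{\<omega>\<in>space M. \<exists>i<n. b < (\<Sum>j<r. (f j (X i \<omega>))^2)} = (\<Union>i<n. {\<omega>\<in>space M. b < (\<Sum>j<r. (f j (X i \<omega>))^2)})"
    by auto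
  have sets: "{\<omega>\<in>space M. b < (\<Sum>j<r. (f j (X i \<omega>))^2)} \<in> sets M" if "i < n" for i
    using Zm[OF that] by measurable
  show "{\<omega>\<in>space M. \<exists>i<n. b < (\<Sum>j<r. (f j (X i \<omega>))^2)} \<in> sets M"
    unfolding eq using sets by auto
  have "measure M {\<omega>\<in>space M. \<exists>i<n. b < (\<Sum>j<r. (f j (X i \<omega>))^2)} \<le> (\<Sum>i<n. measure M {\<omega>\<in>space M. b < (\<Sum>j<r. (f j (X i \<omega>))^2)})"
    unfolding eq by (rule measure_UNION_le) (use sets in auto)
  also have "\<dots> \<le> (\<Sum>i<n. real r powr (\<gamma>/2) * C / b powr (\<gamma>/2))"
    by (rule sum_mono, rule single_markov[where V="\<lambda>j \<omega>. f j (X _ \<omega>)"]) (use Ym mom \<gamma> C b in auto)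
  finally show "measure M {\<omega>\<in>space M. \<exists>i<n. b < (\<Sum>j<r. (f j (X i \<omega>))^2)} \<le> real n * (real r powr (\<gamma>/2) * C / b powr (\<gamma>/2))"
    by simp
qed



theorem mainTheorem2:
  fixes M :: "'a measure" and S :: "'x measure"
    and X :: "nat \<Rightarrow> nat \<Rightarrow> 'a \<Rightarrow> 'x"
    and g :: "nat \<Rightarrow> 'x \<Rightarrow> 'p \<Rightarrow> nat \<Rightarrow> real"
    and r :: "nat \<Rightarrow> nat"
    and \<Theta> :: "'p set" and \<theta>0 :: 'p
    and V :: "real set" and C1 C2 \<gamma> :: real
  assumes prob: "prob_space M"
    and \<theta>0_in: "\<theta>0 \<in> \<Theta>"
    and V_open: "open V" and V_interval: "is_interval V" and V_zero: "0 \<in> V"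
    and V_log_dom: "V \<subseteq> {-1<..}"
    and C1_pos: "C1 > 0" and C2_gt: "C2 > 1" and \<gamma>_gt: "\<gamma> > 2"
    and X_meas: "\<And>n i. i < n \<Longrightarrow> X n i \<in> measurable M S"
    and X_indep: "\<And>n. prob_space.indep_vars M (\<lambda>_. S) (X n) {..<n}"
    and X_ident: "\<And>n i i'. i < n \<Longrightarrow> i' < n \<Longrightarrow> distr M S (X n i) = distr M S (X n i')"
    and g_meas: "\<And>n \<theta> j. \<theta> \<in> \<Theta> \<Longrightarrow> j < r n \<Longrightarrow> (\<lambda>x. g n x \<theta> j) \<in> borel_measurable S"
    and sup_meas: "\<And>n j. j < r n \<Longrightarrow>
          (\<lambda>x. SUP \<theta>\<in>\<Theta>. ennreal (\<bar>g n x \<theta> j\<bar> powr \<gamma>)) \<in> borel_measurable S"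
    and mean_zero: "\<And>n i j. i < n \<Longrightarrow> j < r n \<Longrightarrow>
          prob_space.expectation M (\<lambda>\<omega>. g n (X n i \<omega>) \<theta>0 j) = 0"
    and moment: "\<And>n i j. i < n \<Longrightarrow> j < r n \<Longrightarrow>
          (\<integral>\<^sup>+ \<omega>. (SUP \<theta>\<in>\<Theta>. ennreal (\<bar>g n (X n i \<omega>) \<theta> j\<bar> powr \<gamma>)) \<partial>M) \<le> ennreal C1"
    and eigen: "\<exists>A :: nat \<Rightarrow> 'a set. (\<forall>n. A n \<in> sets M) \<and>
          (\<lambda>n. measure M (A n)) \<longlonglongrightarrow> 1 \<and>
          (\<forall>n. \<forall>\<omega>\<in>A n. \<forall>\<theta>\<in>\<Theta>. \<forall>k. eigenvalue (sample_cov n (r n) (\<lambda>i. X n i \<omega>) (g n) \<theta>) k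
               \<longrightarrow> 1 / C2 \<le> k \<and> k \<le> C2)"
    and r_rate: "(\<lambda>n. real (r n)) \<in> o(\<lambda>n. real n powr (1/2 - 1/\<gamma>))"
  shows "\<forall>\<epsilon>>0. \<exists>K. \<exists>N. \<forall>n\<ge>N. \<exists>B\<in>sets M. measure M B \<ge> 1 - \<epsilon> \<and>
           (\<forall>\<omega>\<in>B. (SUP l\<in>Lambda_hat n (r n) (\<lambda>i. X n i \<omega>) (g n) V \<theta>0.
                      ereal (el_obj n (r n) (\<lambda>i. X n i \<omega>) (g n) \<theta>0 l))
                    \<le> ereal (K * real (r n) / real n))"
proof -
  interpret P: prob_space M by (rule prob)
  show ?thesis
  proof (intro allI impI)
    fix \<epsilon> :: real assume \<epsilon>: "\<epsilon> > 0"
    define \<delta> where "\<delta> = \<epsilon> / 3"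
    have \<delta>: "\<delta> > 0" using \<epsilon> by (simp add: \<delta>_def)
    obtain A :: "nat \<Rightarrow> 'a set" where A_sets: "\<And>n. A n \<in> sets M"
      and A_lim: "(\<lambda>n. measure M (A n)) \<longlonglongrightarrow> 1"
      and A_eig: "\<And>n \<omega> \<theta> k. \<omega> \<in> A n \<Longrightarrow> \<theta> \<in> \<Theta> \<Longrightarrow>
          eigenvalue (sample_cov n (r n) (\<lambda>i. X n i \<omega>) (g n) \<theta>) k \<Longrightarrow> 1 / C2 \<le> k \<and> k \<le> C2"
      using eigen by blast
    have eA: "eventually (\<lambda>n. 1 - \<delta> < measure M (A n)) sequentially"
      by (rule order_tendstoD(1)[OF A_lim]) (use \<delta> in simp)
    define Kc where "Kc = (1 + C1) * ((C1 + 1) / \<delta>) powr (2/\<gamma>) / \<delta>"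
    have Kc: "Kc > 0" using C1_pos \<delta> by (simp add: Kc_def)
    define \<eta> where "\<eta> = 1 / (4 * C2 * sqrt Kc)"
    have \<eta>: "\<eta> > 0" using C2_gt Kc by (simp add: \<eta>_def)
    have \<eta>2: "Kc * \<eta>^2 = (1/C2)^2 / 16"
      using C2_gt Kc by (simp add: \<eta>_def power_divide power_mult_distrib)
    have eR: "eventually (\<lambda>n. (real (r n) + 1)^2 * real n powr (2/\<gamma>) / real n \<le> \<eta>^2) sequentially"
      by (rule rate_eventually[OF \<gamma>_gt r_rate \<eta>])
    have eN: "eventually (\<lambda>n. 0 < n) sequentially" by (rule eventually_gt_at_top)
    obtain N where N: "\<And>n. n \<ge> N \<Longrightarrow> 1 - \<delta> < measure M (A n) \<and>
        (real (r n) + 1)^2 * real n powr (2/\<gamma>) / real n \<le> \<eta>^2 \<and> 0 < n"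
      using eventually_conj[OF eA eventually_conj[OF eR eN]] unfolding eventually_sequentially by blast
    define K where "K = 2 * C2 * (1 + C1) / \<delta>"
    show "\<exists>K. \<exists>N. \<forall>n\<ge>N. \<exists>B\<in>sets M. measure M B \<ge> 1 - \<epsilon> \<and>
           (\<forall>\<omega>\<in>B. (SUP l\<in>Lambda_hat n (r n) (\<lambda>i. X n i \<omega>) (g n) V \<theta>0.
                      ereal (el_obj n (r n) (\<lambda>i. X n i \<omega>) (g n) \<theta>0 l))
                    \<le> ereal (K * real (r n) / real n))"
    proof (intro exI allI impI)
      fix n assume nN: "N \<le> n"
      note Nn = N[OF nN]
      have n0: "0 < n" using Nn by simp
      have nr: "real n > 0" using n0 by simp
      define T where "T = (\<lambda>\<omega>. (\<Sum>j<r n. (\<Sum>i<n. g n (X n i \<omega>) \<theta>0 j)^2))"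
      define a where "a = real n * (real (r n) + 1) * (1 + C1) / \<delta>"
      define b where "b = (real (r n) + 1) * (real n * (C1 + 1) / \<delta>) powr (2/\<gamma>)"
      have a: "a > 0" using n0 C1_pos \<delta> by (simp add: a_def)
      have b: "b > 0" using n0 C1_pos \<delta> by (simp add: b_def)
      define E1 where "E1 = {\<omega>\<in>space M. a \<le> T \<omega>}"
      define E2 where "E2 = {\<omega>\<in>space M. \<exists>i<n. b < (\<Sum>j<r n. (g n (X n i \<omega>) \<theta>0 j)^2)}"
      have mom': "(\<integral>\<^sup>+\<omega>. ennreal (\<bar>g n (X n i \<omega>) \<theta>0 j\<bar> powr \<gamma>) \<partial>M) \<le> ennreal C1"
        if "i < n" "j < r n" for i j
      proof -
        have "(\<integral>\<^sup>+\<omega>. ennreal (\<bar>g n (X n i \<omega>) \<theta>0 j\<bar> powr \<gamma>) \<partial>M)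
            \<le> (\<integral>\<^sup>+ \<omega>. (SUP \<theta>\<in>\<Theta>. ennreal (\<bar>g n (X n i \<omega>) \<theta> j\<bar> powr \<gamma>)) \<partial>M)"
          by (rule nn_integral_mono) (rule SUP_upper[OF \<theta>0_in])
        also have "\<dots> \<le> ennreal C1" by (rule moment[OF that])
        finally show ?thesis .
      qed
      have g0m: "(\<lambda>x. g n x \<theta>0 j) \<in> borel_measurable S" if "j < r n" for j
        by (rule g_meas[OF \<theta>0_in that])
      note SM = P.second_moment[of n "X n" S "r n" "\<lambda>j x. g n x \<theta>0 j" \<gamma> C1,
          OF X_meas X_indep g0m mean_zero mom' _ less_imp_le[OF C1_pos]]
      have SM1: "integrable M T" using SM(1) \<gamma>_gt by (simp add: T_def)
      have SM2: "P.expectation T \<le> real n * real (r n) * (1 + C1)"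
        using SM(2) \<gamma>_gt by (simp add: T_def)
      have E1s: "E1 \<in> sets M" unfolding E1_def using borel_measurable_integrable[OF SM1] by measurable
      have "measure M E1 \<le> P.expectation T / a"
        unfolding E1_def
        by (rule integral_Markov_inequality_measure[OF SM1 _ _ a]) (auto simp: T_def intro!: AE_I2 sum_nonneg)
      also have "\<dots> \<le> \<delta>"
      proof -
        have "real n * real (r n) * (1+C1) \<le> real n * (real (r n) + 1) * (1 + C1)"
          using C1_pos by (intro mult_right_mono mult_left_mono) auto
        moreover have "a * \<delta> = real n * (real (r n) + 1) * (1 + C1)" using \<delta> by (simp add: a_def)
        ultimately have "P.expectation T \<le> a * \<delta>" using SM2 by linarith
        then show ?thesis using a by (simp add: divide_le_eq mult.commute)
      qed
      finally have mE1: "measure M E1 \<le> \<delta>" .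
      have \<gamma>2: "2 \<le> \<gamma>" using \<gamma>_gt by simp
      note MM = P.max_markov[of n "X n" S "r n" "\<lambda>j x. g n x \<theta>0 j" \<gamma> C1 b,
          OF X_meas g0m mom' \<gamma>2 less_imp_le[OF C1_pos] b]
      have E2s: "E2 \<in> sets M" unfolding E2_def by (rule MM(1))
      have "measure M E2 \<le> real n * (real (r n) powr (\<gamma>/2) * C1 / b powr (\<gamma>/2))"
        unfolding E2_def by (rule MM(2))
      also have "\<dots> \<le> \<delta>"
      proof -
        have bp: "b powr (\<gamma>/2) = (real (r n) + 1) powr (\<gamma>/2) * (real n * (C1 + 1) / \<delta>)"
          using n0 C1_pos \<delta> \<gamma>_gt
          by (simp add: b_def powr_mult powr_powr)
        have rp: "real (r n) powr (\<gamma>/2) \<le> (real (r n) + 1) powr (\<gamma>/2)"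
          using \<gamma>_gt by (intro powr_mono2) auto
        have rp0: "(real (r n) + 1) powr (\<gamma>/2) > 0" by simp
        have "real n * (real (r n) powr (\<gamma>/2) * C1) \<le> real n * ((real (r n) + 1) powr (\<gamma>/2) * (C1 + 1))"
          using rp C1_pos by (intro mult_left_mono mult_mono) auto
        also have "\<dots> = \<delta> * b powr (\<gamma>/2)" using \<delta> by (simp add: bp field_simps)
        finally show ?thesis using b by (simp add: divide_le_eq mult.commute mult.left_commute)
      qed
      finally have mE2: "measure M E2 \<le> \<delta>" .
      define B where "B = space M - ((space M - A n) \<union> E1 \<union> E2)"
      have Bs: "B \<in> sets M" unfolding B_def using A_sets E1s E2s by auto
      have "measure M ((space M - A n) \<union> E1 \<union> E2) \<le> measure M (space M - A n) + measure M E1 + measure M E2"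
      proof -
        have u1: "measure M ((space M - A n) \<union> E1) \<le> measure M (space M - A n) + measure M E1"
          by (rule measure_Un_le) (use A_sets E1s in auto)
        have u2: "measure M ((space M - A n) \<union> E1 \<union> E2) \<le> measure M ((space M - A n) \<union> E1) + measure M E2"
          by (rule measure_Un_le) (use A_sets E1s E2s in auto)
        show ?thesis using u1 u2 by linarith
      qed
      moreover have "measure M (space M - A n) = 1 - measure M (A n)"
        using A_sets by (simp add: P.prob_compl)
      moreover have "measure M B = 1 - measure M ((space M - A n) \<union> E1 \<union> E2)"
        unfolding B_def using A_sets E1s E2s by (intro P.prob_compl) auto
      ultimately have mB: "measure M B \<ge> 1 - \<epsilon>" using Nn mE1 mE2 by (simp add: \<delta>_def)
      show "\<exists>B\<in>sets M. measure M B \<ge> 1 - \<epsilon> \<and>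
           (\<forall>\<omega>\<in>B. (SUP l\<in>Lambda_hat n (r n) (\<lambda>i. X n i \<omega>) (g n) V \<theta>0.
                      ereal (el_obj n (r n) (\<lambda>i. X n i \<omega>) (g n) \<theta>0 l))
                    \<le> ereal (K * real (r n) / real n))"
      proof (intro bexI conjI ballI)
        show "B \<in> sets M" by (rule Bs)
        show "measure M B \<ge> 1 - \<epsilon>" by (rule mB)
        fix \<omega> assume \<omega>B: "\<omega> \<in> B"
        have \<omega>sp: "\<omega> \<in> space M" and \<omega>A: "\<omega> \<in> A n" and n1: "\<omega> \<notin> E1" and n2: "\<omega> \<notin> E2"
          using \<omega>B by (auto simp: B_def)
        have \<omega>T: "T \<omega> < a" using n1 \<omega>sp by (auto simp: E1_def)
        have \<omega>M: "(\<Sum>j<r n. (g n (X n i \<omega>) \<theta>0 j)^2) \<le> b" if "i < n" for i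
          using n2 \<omega>sp that unfolding E2_def by (metis (mono_tags, lifting) mem_Collect_eq not_less)
        show "(SUP l\<in>Lambda_hat n (r n) (\<lambda>i. X n i \<omega>) (g n) V \<theta>0.
                      ereal (el_obj n (r n) (\<lambda>i. X n i \<omega>) (g n) \<theta>0 l))
                    \<le> ereal (K * real (r n) / real n)"
        proof (rule SUP_least)
          fix l assume l: "l \<in> Lambda_hat n (r n) (\<lambda>i. X n i \<omega>) (g n) V \<theta>0"
          have lpos: "-1 < (\<Sum>j<r n. l j * g n (X n i \<omega>) \<theta>0 j)" if "i < n" for i
            using l V_log_dom that by (auto simp: Lambda_hat_def)
          show "ereal (el_obj n (r n) (\<lambda>i. X n i \<omega>) (g n) \<theta>0 l) \<le> ereal (K * real (r n) / real n)"
          proof (cases "r n = 0")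
            case True
            then show ?thesis by (simp add: el_obj_def)
          next
            case False
            define s where "s j k = (1/real n) * (\<Sum>i<n. g n (X n i \<omega>) \<theta>0 j * g n (X n i \<omega>) \<theta>0 k)" for j k
            have scov: "sample_cov n (r n) (\<lambda>i. X n i \<omega>) (g n) \<theta>0 = mat (r n) (r n) (\<lambda>(j,k). s j k)"
              by (simp add: sample_cov_def s_def)
            have ev: "1 / C2 \<le> k" if "eigenvalue (mat (r n) (r n) (\<lambda>(j,k). s j k)) k" for k
              using A_eig[OF \<omega>A \<theta>0_in, of k] that by (simp add: scov)
            have ssym: "s j k = s k j" for j k by (simp add: s_def mult.commute)
            have quad: "1 / C2 * (\<Sum>j<r n. (l j)^2) \<le> (1/real n) * (\<Sum>i<n. (\<Sum>j<r n. l j * g n (X n i \<omega>) \<theta>0 j)^2)"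
              using quad_lower[of s "r n" "1/C2" l, OF ssym ev]
              unfolding s_def quad_eq by simp
            have bsplit: "(real n * (C1 + 1) / \<delta>) powr (2/\<gamma>) = real n powr (2/\<gamma>) * ((C1 + 1) / \<delta>) powr (2/\<gamma>)"
              using C1_pos \<delta> by (simp add: powr_mult[symmetric])
            have sb: "T \<omega> / real (n^2) * b \<le> (1/C2)^2 / 16"
            proof -
              have "T \<omega> \<le> a" using \<omega>T by simp
              then have "T \<omega> / (real n)^2 \<le> a / (real n)^2" by (rule divide_right_mono) simp
              then have "T \<omega> / (real n)^2 * b \<le> a / (real n)^2 * b"
                using b by (intro mult_right_mono) auto
              then have "T \<omega> / real (n^2) * b \<le> a / (real n)^2 * b" by (simp only: of_nat_power)
              also have "\<dots> = Kc * ((real (r n) + 1)^2 * real n powr (2/\<gamma>) / real n)"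
                unfolding a_def b_def bsplit Kc_def using nr \<delta> C1_pos
                by (simp add: power2_eq_square)
              also have "\<dots> \<le> Kc * \<eta>^2" using Nn Kc by (intro mult_left_mono) auto
              finally show ?thesis using \<eta>2 by simp
            qed
            have "el_obj n (r n) (\<lambda>i. X n i \<omega>) (g n) \<theta>0 l \<le> T \<omega> / real (n^2) / (1/C2)"
              unfolding el_obj_def T_def
              by (rule det_bound[OF n0 _ less_imp_le[OF b] quad \<omega>M sb[unfolded T_def] lpos])
                 (use C2_gt in simp)
            also have "\<dots> \<le> a / (real n)^2 * C2"
              using \<omega>T C2_gt nr by (simp add: divide_right_mono mult_right_mono)
            also have "\<dots> \<le> K * real (r n) / real n"
            proof -
              have "real (r n) + 1 \<le> 2 * real (r n)" using False by simp
              then have "a / (real n)^2 * C2 = C2 * (1 + C1) / \<delta> * (real (r n) + 1) / real n"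
                using nr by (simp add: a_def power2_eq_square)
              also have "\<dots> \<le> C2 * (1 + C1) / \<delta> * (2 * real (r n)) / real n"
                using \<open>real (r n) + 1 \<le> 2 * real (r n)\<close> C2_gt C1_pos \<delta> nr
                by (intro divide_right_mono mult_left_mono) auto
              also have "\<dots> = K * real (r n) / real n" by (simp add: K_def)
              finally show ?thesis .
            qed
            finally show ?thesis by simp
          qed
        qed
      qed
    qed
  qed
qed


end
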